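(* Let $R=\mathbb{Z}$ or $\mathbb{Z}[i]$ with fraction field $K$, let $1\leq k<n$, and let $A_0=(a_1|\dots|a_k)\in R^{n\times k}$ be a $k$-icube of norm $\lambda$. Then (1) the $R$-module $\Lambda=\{w\in R^n: a_j^*w=0 \text{ for } 1\leq j\leq k\}$ is free of rank $n-k$; (2) if $Q$ denotes the restriction of the standard form $(x,y)\mapsto x^*y$ to $\Lambda$ and $\mathrm{disc}(Q)$ the determinant of its Gram matrix with respect to an $R$-basis of $\Lambda$, then $\mathrm{disc}(Q)=\lambda^k/|d_k(A_0)|^2$.
   Context: A $k$-icube of norm $\lambda>0$ in $R^n$ is $(v_1|\dots|v_k)\in R^{n\times k}$ with $v_i^*v_j=\lambda$ if $i=j$ and $0$ otherwise ($v^*$ the conjugate transpose). $d_k(A_0)$ is the $k$-th determinantal divisor: the gcd of the $k\times k$ minors of $A_0$ (defined up to a unit; $|d_k(A_0)|^2$ is well defined). *)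

theory Defs
  imports "Jordan_Normal_Form.Determinant" "Jordan_Normal_Form.DL_Submatrix"
begin

definition rat_ints :: "complex set" where
  "rat_ints = {z. Re z \<in> \<int> \<and> Im z = 0}"

definition gauss_ints :: "complex set" where
  "gauss_ints = {z. Re z \<in> \<int> \<and> Im z \<in> \<int>}"

definition hinner :: "complex vec \<Rightarrow> complex vec \<Rightarrow> complex" where
  "hinner v w = (\<Sum>i<dim_vec v. cnj (v $ i) * w $ i)"

definition vec_over :: "complex set \<Rightarrow> nat \<Rightarrow> complex vec set" where
  "vec_over R n = {v \<in> carrier_vec n. \<forall>i<n. v $ i \<in> R}"

definition icube :: "complex set \<Rightarrow> nat \<Rightarrow> nat \<Rightarrow> real \<Rightarrow> complex mat \<Rightarrow> bool" where
  "icube R n k lam A \<longleftrightarrow> A \<in> carrier_mat n k \<and> (\<forall>i<n. \<forall>j<k. A $$ (i,j) \<in> R) \<and> lam > 0 \<and>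
     (\<forall>i<k. \<forall>j<k. hinner (col A i) (col A j) = (if i = j then complex_of_real lam else 0))"

definition R_dvd :: "complex set \<Rightarrow> complex \<Rightarrow> complex \<Rightarrow> bool" where
  "R_dvd R a b \<longleftrightarrow> (\<exists>c\<in>R. b = a * c)"

definition minors :: "nat \<Rightarrow> complex mat \<Rightarrow> complex set" where
  "minors k A = {det (submatrix A I {0..<k}) | I. I \<subseteq> {0..<dim_row A} \<and> card I = k}"

definition is_det_divisor :: "complex set \<Rightarrow> nat \<Rightarrow> complex mat \<Rightarrow> complex \<Rightarrow> bool" where
  "is_det_divisor R k A d \<longleftrightarrow> d \<in> R \<and> (\<forall>m\<in>minors k A. R_dvd R d m) \<and>
     (\<forall>e\<in>R. (\<forall>m\<in>minors k A. R_dvd R e m) \<longrightarrow> R_dvd R e d)"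

definition orth_lattice :: "complex set \<Rightarrow> nat \<Rightarrow> nat \<Rightarrow> complex mat \<Rightarrow> complex vec set" where
  "orth_lattice R n k A = {w \<in> vec_over R n. \<forall>j<k. hinner (col A j) w = 0}"

definition is_R_basis :: "complex set \<Rightarrow> nat \<Rightarrow> complex vec set \<Rightarrow> complex vec list \<Rightarrow> bool" where
  "is_R_basis R n L bs \<longleftrightarrow> set bs \<subseteq> L \<and>
     (\<forall>w\<in>L. \<exists>!c. (\<forall>i<length bs. c i \<in> R) \<and> (\<forall>i\<ge>length bs. c i = 0) \<and>
        w = finsum_vec TYPE(complex) n (\<lambda>i. c i \<cdot>\<^sub>v bs ! i) {0..<length bs})"

definition gram :: "complex vec list \<Rightarrow> complex mat" where
  "gram bs = mat (length bs) (length bs) (\<lambda>(i,j). hinner (bs ! i) (bs ! j))"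

end

theory Submission
  imports Defs
begin

definition goodR :: "complex set \<Rightarrow> bool" where
 "goodR R \<longleftrightarrow> 0 \<in> R \<and> 1 \<in> R \<and> (\<forall>a\<in>R. \<forall>b\<in>R. a + b \<in> R \<and> a * b \<in> R) \<and>
   (\<forall>a\<in>R. - a \<in> R \<and> cnj a \<in> R \<and> (\<exists>m::nat. (cmod a)^2 = real m)) \<and>
   (\<forall>a\<in>R. \<forall>b\<in>R. b \<noteq> 0 \<longrightarrow> (\<exists>q\<in>R. cmod (a - q * b) < cmod b))"

lemma round_half: "\<bar>x - of_int (round x)\<bar> \<le> (1/2::real)"
  using of_int_round_ge[of x] of_int_round_le[of x] by linarith

lemma goodR_gauss: "goodR gauss_ints"
proof -
  have E: "\<exists>q\<in>gauss_ints. cmod (a - q * b) < cmod b" if "b \<noteq> 0" for a b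
  proof -
    define z where "z = a / b"
    define q where "q = Complex (of_int (round (Re z))) (of_int (round (Im z)))"
    have q: "q \<in> gauss_ints" unfolding q_def gauss_ints_def by auto
    have "(cmod (z - q))^2 = (Re z - of_int (round (Re z)))^2 + (Im z - of_int (round (Im z)))^2"
      unfolding q_def cmod_power2 by simp
    also have "\<dots> \<le> (1/2)^2 + (1/2)^2"
      by (intro add_mono) (metis abs_le_square_iff abs_of_nonneg round_half zero_le_divide_1_iff zero_le_numeral)+
    finally have "(cmod (z - q))^2 < 1^2" by (simp add: power2_eq_square)
    hence lt: "cmod (z - q) < 1" by (smt (verit) norm_ge_zero power_mono)
    have "a - q * b = (z - q) * b" unfolding z_def using that by (simp add: field_simps)
    hence "cmod (a - q * b) = cmod (z - q) * cmod b" by (simp add: norm_mult)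
    also have "\<dots> < cmod b" using lt that by simp
    finally show ?thesis using q by blast
  qed
  have N: "\<exists>m::nat. (cmod a)^2 = real m" if "a \<in> gauss_ints" for a
  proof -
    have "Re a \<in> \<int>" "Im a \<in> \<int>" using that unfolding gauss_ints_def by auto
    then obtain x y where "Re a = of_int x" "Im a = of_int y" by (auto elim!: Ints_cases)
    hence "(cmod a)^2 = of_int (x^2 + y^2)" unfolding cmod_power2 by simp
    moreover have "x^2 + y^2 \<ge> 0" by simp
    ultimately show ?thesis by (metis of_int_of_nat_eq of_real_of_int_eq nonneg_int_cases)
  qed
  show ?thesis unfolding goodR_def using E N
    by (auto simp: gauss_ints_def)
qed

lemma goodR_rat: "goodR rat_ints"
proof -
  have E: "\<exists>q\<in>rat_ints. cmod (a - q * b) < cmod b" if "b \<noteq> 0" "a \<in> rat_ints" "b \<in> rat_ints" for a b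
  proof -
    define z where "z = a / b"
    have "Im z = 0" using that unfolding z_def rat_ints_def by (simp add: Im_divide)
    define q where "q = Complex (of_int (round (Re z))) 0"
    have q: "q \<in> rat_ints" unfolding q_def rat_ints_def by auto
    have "cmod (z - q) = \<bar>Re z - of_int (round (Re z))\<bar>" unfolding q_def cmod_def using \<open>Im z = 0\<close> by simp
    also have "\<dots> < 1" using round_half[of "Re z"] by simp
    finally have lt: "cmod (z - q) < 1" .
    have "a - q * b = (z - q) * b" unfolding z_def using that by (simp add: field_simps)
    hence "cmod (a - q * b) = cmod (z - q) * cmod b" by (simp add: norm_mult)
    also have "\<dots> < cmod b" using lt that by simp
    finally show ?thesis using q by blast
  qed
  have N: "\<exists>m::nat. (cmod a)^2 = real m" if "a \<in> rat_ints" for a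
  proof -
    have "Re a \<in> \<int>" "Im a = 0" using that unfolding rat_ints_def by auto
    then obtain x where "Re a = of_int x" "Im a = 0" by (auto elim!: Ints_cases)
    hence "(cmod a)^2 = of_int (x^2)" unfolding cmod_power2 by simp
    moreover have "x^2 \<ge> 0" by simp
    ultimately show ?thesis by (metis of_int_of_nat_eq of_real_of_int_eq nonneg_int_cases)
  qed
  show ?thesis unfolding goodR_def using E N
    by (auto simp: rat_ints_def)
qed

locale gr = fixes R :: "complex set" assumes good: "goodR R"
begin

lemma zero[simp,intro]: "0 \<in> R" and one[simp,intro]: "1 \<in> R"
  using good unfolding goodR_def by auto
lemma add[intro]: "a \<in> R \<Longrightarrow> b \<in> R \<Longrightarrow> a + b \<in> R"
  and mult[intro]: "a \<in> R \<Longrightarrow> b \<in> R \<Longrightarrow> a * b \<in> R"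
  and uminus[intro]: "a \<in> R \<Longrightarrow> - a \<in> R"
  and cnj[intro]: "a \<in> R \<Longrightarrow> cnj a \<in> R"
  using good unfolding goodR_def by auto
lemma diff[intro]: "a \<in> R \<Longrightarrow> b \<in> R \<Longrightarrow> a - b \<in> R"
  using add[of a "-b"] uminus[of b] by simp
lemma normnat: "a \<in> R \<Longrightarrow> \<exists>m::nat. (cmod a)^2 = real m"
  using good unfolding goodR_def by auto
lemma euclid: "a \<in> R \<Longrightarrow> b \<in> R \<Longrightarrow> b \<noteq> 0 \<Longrightarrow> \<exists>q\<in>R. cmod (a - q * b) < cmod b"
  using good unfolding goodR_def by auto

lemma sum_in[intro]: "(\<And>x. x \<in> S \<Longrightarrow> f x \<in> R) \<Longrightarrow> sum f S \<in> R"
  by (induction S rule: infinite_finite_induct) auto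
lemma prod_in[intro]: "(\<And>x. x \<in> S \<Longrightarrow> f x \<in> R) \<Longrightarrow> prod f S \<in> R"
  by (induction S rule: infinite_finite_induct) auto
lemma signof_in[intro]: "(of_int (sign p) :: complex) \<in> R"
  by (auto simp: sign_def)

lemma det_in: assumes "\<And>i j. i < dim_row A \<Longrightarrow> j < dim_col A \<Longrightarrow> A $$ (i,j) \<in> R"
  shows "det A \<in> R"
proof -
  have "\<And>p i. p permutes {0..<dim_row A} \<Longrightarrow> i \<in> {0..<dim_row A} \<Longrightarrow> dim_row A = dim_col A \<Longrightarrow> A $$ (i, p i) \<in> R"
    using assms by (metis atLeastLessThan_iff permutes_in_image)
  thus ?thesis unfolding det_def by (auto intro!: sum_in mult prod_in)
qed

lemma dvd_refl: "a \<in> R \<Longrightarrow> R_dvd R a a" unfolding R_dvd_def by (rule bexI[of _ 1]) auto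
lemma dvd_zero: "R_dvd R a 0" unfolding R_dvd_def by (rule bexI[of _ 0]) auto
lemma dvd_trans: "R_dvd R a b \<Longrightarrow> R_dvd R b c \<Longrightarrow> R_dvd R a c"
  unfolding R_dvd_def by (metis mult.assoc mult)
lemma dvd_add: "R_dvd R a b \<Longrightarrow> R_dvd R a c \<Longrightarrow> R_dvd R a (b + c)"
  unfolding R_dvd_def by (metis add distrib_left)
lemma dvd_mult: "R_dvd R a b \<Longrightarrow> c \<in> R \<Longrightarrow> R_dvd R a (c * b)"
  unfolding R_dvd_def by (metis mult mult.left_commute)
lemma dvd_mult2: "R_dvd R a b \<Longrightarrow> c \<in> R \<Longrightarrow> R_dvd R a (b * c)"
  using dvd_mult by (simp add: mult.commute)
lemma dvd_uminus: "R_dvd R a b \<Longrightarrow> R_dvd R a (- b)"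
  unfolding R_dvd_def by (metis uminus mult_minus_right)
lemma dvd_diff: "R_dvd R a b \<Longrightarrow> R_dvd R a c \<Longrightarrow> R_dvd R a (b - c)"
  using dvd_add dvd_uminus by (metis diff_conv_add_uminus)
lemma dvd_sum: "(\<And>x. x \<in> S \<Longrightarrow> R_dvd R a (f x)) \<Longrightarrow> R_dvd R a (sum f S)"
  by (induction S rule: infinite_finite_induct) (auto intro: dvd_add dvd_zero)

lemma bezout: "a \<in> R \<Longrightarrow> b \<in> R \<Longrightarrow> \<exists>g\<in>R. \<exists>s\<in>R. \<exists>t\<in>R. g = s * a + t * b \<and> R_dvd R g a \<and> R_dvd R g b"
proof (induction "nat \<lfloor>(cmod b)^2\<rfloor>" arbitrary: a b rule: less_induct)
  case less
  show ?case
  proof (cases "b = 0")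
    case True
    thus ?thesis using less.prems by (intro bexI[of _ a] bexI[of _ 1] bexI[of _ 0]) (auto intro: dvd_refl dvd_zero)
  next
    case False
    obtain q where q: "q \<in> R" "cmod (a - q * b) < cmod b" using euclid[OF less.prems False] by auto
    define r where "r = a - q * b"
    have r: "r \<in> R" unfolding r_def using q less.prems by auto
    obtain m1 where m1: "(cmod b)^2 = real m1" using normnat less.prems by auto
    obtain m2 where m2: "(cmod r)^2 = real m2" using normnat r by auto
    have "(cmod r)^2 < (cmod b)^2" using q(2) unfolding r_def by (simp add: power_strict_mono)
    hence "nat \<lfloor>(cmod r)^2\<rfloor> < nat \<lfloor>(cmod b)^2\<rfloor>" using m1 m2 by simp
    from less.hyps[OF this less.prems(2) r] obtain g s t where
      g: "g \<in> R" "s \<in> R" "t \<in> R" "g = s * b + t * r" "R_dvd R g b" "R_dvd R g r" by blast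
    have "g = t * a + (s - t * q) * b" unfolding g(4) r_def by (simp add: algebra_simps)
    moreover have "R_dvd R g a"
    proof -
      have "a = r + q * b" unfolding r_def by simp
      thus ?thesis using dvd_add[OF g(6) dvd_mult[OF g(5) q(1)]] by simp
    qed
    ultimately show ?thesis using g q by (intro bexI[of _ g] bexI[of _ t] bexI[of _ "s - t * q"]) auto
  qed
qed

lemma gcd_exists: "finite S \<Longrightarrow> S \<subseteq> R \<Longrightarrow> \<exists>g\<in>R. (\<forall>m\<in>S. R_dvd R g m) \<and> (\<forall>e\<in>R. (\<forall>m\<in>S. R_dvd R e m) \<longrightarrow> R_dvd R e g)"
proof (induction S rule: finite_induct)
  case empty
  then show ?case by (intro bexI[of _ 0]) (auto intro: dvd_zero)
next
  case (insert x S)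
  then obtain g0 where g0: "g0 \<in> R" "\<forall>m\<in>S. R_dvd R g0 m" "\<forall>e\<in>R. (\<forall>m\<in>S. R_dvd R e m) \<longrightarrow> R_dvd R e g0" by auto
  obtain g s t where g: "g \<in> R" "s \<in> R" "t \<in> R" "g = s * g0 + t * x" "R_dvd R g g0" "R_dvd R g x"
    using bezout[OF g0(1), of x] insert by auto
  show ?case
  proof (intro bexI[OF _ g(1)] conjI ballI impI)
    show "R_dvd R g m" if "m \<in> insert x S" for m using that g g0 dvd_trans by auto
    show "R_dvd R e g" if "e \<in> R" "\<forall>m\<in>insert x S. R_dvd R e m" for e
      using that g0(3) unfolding g(4) by (auto intro!: dvd_add dvd_mult g)
  qed
qed

lemma unit_norm: assumes "a \<in> R" "b \<in> R" "a * b = 1" shows "cmod a = 1"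
proof -
  obtain m1 m2 where m: "(cmod a)^2 = real m1" "(cmod b)^2 = real m2" using normnat assms by metis
  have "(cmod a)^2 * (cmod b)^2 = 1" using assms(3) by (metis norm_mult norm_one power_mult_distrib power_one)
  hence "m1 * m2 = 1" using m by (metis of_nat_1 of_nat_eq_iff of_nat_mult)
  hence "m1 = 1" by simp
  hence "(cmod a)^2 = 1^2" using m(1) by simp
  thus ?thesis using power2_eq_iff_nonneg by (metis norm_ge_zero zero_le_one)
qed

end

definition Rmat :: "complex set \<Rightarrow> complex mat \<Rightarrow> bool" where
  "Rmat R A \<longleftrightarrow> (\<forall>i<dim_row A. \<forall>j<dim_col A. A $$ (i,j) \<in> R)"

definition unimod :: "complex set \<Rightarrow> nat \<Rightarrow> complex mat \<Rightarrow> bool" where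
  "unimod R n V \<longleftrightarrow> V \<in> carrier_mat n n \<and> Rmat R V \<and> (\<exists>u\<in>R. det V * u = 1)"

context gr begin

lemma power_in: "a \<in> R \<Longrightarrow> a ^ m \<in> R" by (induction m) auto

lemma Rmat_mult: "Rmat R A \<Longrightarrow> Rmat R B \<Longrightarrow> dim_col A = dim_row B \<Longrightarrow> Rmat R (A * B)"
  unfolding Rmat_def by (auto simp: scalar_prod_def intro!: sum_in mult)

lemma Rmat_one: "Rmat R (1\<^sub>m n)" unfolding Rmat_def by auto

lemma Rmat_det: "Rmat R A \<Longrightarrow> det A \<in> R"
  unfolding Rmat_def by (rule det_in) auto

lemma unimod_mult: "unimod R n A \<Longrightarrow> unimod R n B \<Longrightarrow> unimod R n (A * B)"
  unfolding unimod_def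
proof (elim conjE bexE, intro conjI)
  fix u v assume *: "A \<in> carrier_mat n n" "Rmat R A" "u \<in> R" "det A * u = 1"
     "B \<in> carrier_mat n n" "Rmat R B" "v \<in> R" "det B * v = 1"
  show "A * B \<in> carrier_mat n n" using * by auto
  show "Rmat R (A * B)" using * by (intro Rmat_mult) auto
  show "\<exists>w\<in>R. det (A * B) * w = 1" using * det_mult[of A n B]
    by (intro bexI[of _ "u * v"]) (auto simp: algebra_simps)
qed

lemma unimod_one: "unimod R n (1\<^sub>m n)" unfolding unimod_def using Rmat_one by auto

lemma unimod_inv: assumes "unimod R n V"
  shows "\<exists>W. unimod R n W \<and> V * W = 1\<^sub>m n \<and> W * V = 1\<^sub>m n"
proof -
  from assms obtain u where V: "V \<in> carrier_mat n n" "Rmat R V" "u \<in> R" "det V * u = 1"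
    unfolding unimod_def by auto
  define W where "W = u \<cdot>\<^sub>m adj_mat V"
  have W: "W \<in> carrier_mat n n" unfolding W_def using adj_mat(1)[OF V(1)] by auto
  have "V * W = u \<cdot>\<^sub>m (V * adj_mat V)" unfolding W_def using adj_mat(1)[OF V(1)] V(1)
    by (simp add: mult_smult_distrib)
  also have "\<dots> = 1\<^sub>m n" using adj_mat(2)[OF V(1)] V(4) by (intro eq_matI) (auto simp: mult.commute)
  finally have VW: "V * W = 1\<^sub>m n" .
  have "W * V = u \<cdot>\<^sub>m (adj_mat V * V)" unfolding W_def using adj_mat(1)[OF V(1)] V(1)
    by (simp add: mult_smult_assoc_mat)
  also have "\<dots> = 1\<^sub>m n" using adj_mat(3)[OF V(1)] V(4) by (intro eq_matI) (auto simp: mult.commute)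
  finally have WV: "W * V = 1\<^sub>m n" .
  have RW: "Rmat R W"
  proof -
    have "Rmat R (mat_delete V i j)" for i j using V(1,2) unfolding Rmat_def mat_delete_def by auto
    hence "cofactor V i j \<in> R" for i j unfolding cofactor_def
      by (intro mult Rmat_det) (auto intro!: power_in)
    thus ?thesis unfolding W_def Rmat_def adj_mat_def using V(3) by auto
  qed
  have "det W * det V = 1" using det_mult[OF W V(1)] WV by simp
  hence "unimod R n W" unfolding unimod_def using W RW Rmat_det[OF V(2)] by auto
  thus ?thesis using VW WV by auto
qed

lemma unimod_addrow: "a \<in> R \<Longrightarrow> k \<noteq> l \<Longrightarrow> unimod R n (addrow_mat n a k l)"
  unfolding unimod_def Rmat_def using det_addrow_mat[of k l n a] by (auto intro!: bexI[of _ 1])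

lemma unimod_swaprows: "k < n \<Longrightarrow> l < n \<Longrightarrow> k \<noteq> l \<Longrightarrow> unimod R n (swaprows_mat n k l)"
  unfolding unimod_def Rmat_def using det_swaprows_mat[of k n l, where 'a=complex] by (intro conjI bexI[of _ "-1"]) auto

lemma two_col:
  assumes "X \<in> carrier_mat p n" "Rmat R X" "j < n" "l < n" "j \<noteq> l" "r < p"
  shows "\<exists>V. unimod R n V \<and> (\<forall>i<p. \<forall>c<n. c \<noteq> j \<and> c \<noteq> l \<longrightarrow> (X*V)$$(i,c) = X$$(i,c)) \<and>
     (X*V)$$(r,l) = 0 \<and> (\<forall>i<p. X$$(i,j) = 0 \<and> X$$(i,l) = 0 \<longrightarrow> (X*V)$$(i,j) = 0 \<and> (X*V)$$(i,l) = 0)"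
  using assms
proof (induction "nat \<lfloor>(cmod (X$$(r,l)))^2\<rfloor>" arbitrary: X rule: less_induct)
  case less
  show ?case
  proof (cases "X$$(r,l) = 0")
    case True
    then show ?thesis using less.prems by (intro exI[of _ "1\<^sub>m n"]) (auto simp: unimod_one)
  next
    case False
    have inR: "X$$(i,c) \<in> R" if "i < p" "c < n" for i c using less.prems that unfolding Rmat_def by auto
    obtain q where q: "q \<in> R" "cmod (X$$(r,j) - q * X$$(r,l)) < cmod (X$$(r,l))"
      using euclid[OF inR[OF less.prems(6) less.prems(3)] inR[OF less.prems(6) less.prems(4)] False] by blast
    define E where "E = addrow_mat n (-q) l j * swaprows_mat n j l"
    define Y where "Y = X * E"
    have a1: "addcol (-q) j l X = X * addrow_mat n (-q) l j" by (rule addcol_mat[OF less.prems(1) less.prems(4)])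
    have a2: "swapcols j l (X * addrow_mat n (-q) l j) = (X * addrow_mat n (-q) l j) * swaprows_mat n j l"
      by (rule swapcols_mat[of _ p n]) (use less.prems in auto)
    have a3: "(X * addrow_mat n (-q) l j) * swaprows_mat n j l = X * E"
      unfolding E_def by (rule assoc_mult_mat[of X p n _ n _ n]) (use less.prems in auto)
    have Yeq: "Y = swapcols j l (addcol (-q) j l X)"
      unfolding Y_def a1 a2 a3 ..
    have Yc: "Y \<in> carrier_mat p n" unfolding Yeq using less.prems(1) by auto
    have Yi: "Y$$(i,c) = (if c = j then X$$(i,l) else if c = l then -q * X$$(i,l) + X$$(i,j) else X$$(i,c))"
      if "i < p" "c < n" for i c unfolding Yeq using less.prems(1,3,4,5) that by auto
    have E: "unimod R n E" unfolding E_def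
      using less.prems q by (intro unimod_mult unimod_addrow unimod_swaprows) auto
    have RY: "Rmat R Y" unfolding Y_def using E less.prems unfolding unimod_def
      by (intro Rmat_mult) auto
    have "Y$$(r,l) = X$$(r,j) - q * X$$(r,l)" using Yi less.prems by auto
    obtain m1 where m1: "(cmod (X$$(r,l)))^2 = real m1" using normnat[OF inR[OF less.prems(6) less.prems(4)]] by blast
    have "Y$$(r,l) \<in> R" using RY Yc less.prems(4,6) unfolding Rmat_def by auto
    then obtain m2 where m2: "(cmod (Y$$(r,l)))^2 = real m2" using normnat by blast
    have "(cmod (Y$$(r,l)))^2 < (cmod (X$$(r,l)))^2" using q(2) \<open>Y$$(r,l) = _\<close> by (simp add: power_strict_mono)
    hence "nat \<lfloor>(cmod (Y$$(r,l)))^2\<rfloor> < nat \<lfloor>(cmod (X$$(r,l)))^2\<rfloor>" using m1 m2 by simp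
    from less.hyps[OF this Yc RY less.prems(3-)] obtain V' where V':
      "unimod R n V'" "\<forall>i<p. \<forall>c<n. c \<noteq> j \<and> c \<noteq> l \<longrightarrow> (Y*V')$$(i,c) = Y$$(i,c)"
      "(Y*V')$$(r,l) = 0" "\<forall>i<p. Y$$(i,j) = 0 \<and> Y$$(i,l) = 0 \<longrightarrow> (Y*V')$$(i,j) = 0 \<and> (Y*V')$$(i,l) = 0"
      by blast
    have XV: "X * (E * V') = Y * V'" unfolding Y_def using E V'(1) less.prems unfolding unimod_def
      by (simp add: assoc_mult_mat[of X p n E n V' n])
    have P1: "\<forall>i<p. \<forall>c<n. c \<noteq> j \<and> c \<noteq> l \<longrightarrow> (Y*V')$$(i,c) = X$$(i,c)" using V'(2) Yi by auto
    have P3: "\<forall>i<p. X$$(i,j) = 0 \<and> X$$(i,l) = 0 \<longrightarrow> (Y*V')$$(i,j) = 0 \<and> (Y*V')$$(i,l) = 0"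
    proof (intro allI impI)
      fix i assume i: "i < p" "X$$(i,j) = 0 \<and> X$$(i,l) = 0"
      then have "Y$$(i,j) = 0" "Y$$(i,l) = 0" using Yi less.prems(3,4,5) by auto
      thus "(Y*V')$$(i,j) = 0 \<and> (Y*V')$$(i,l) = 0" using V'(4) i(1) by blast
    qed
    show ?thesis
      by (rule exI[of _ "E * V'"], unfold XV) (intro conjI unimod_mult[OF E V'(1)] P1 V'(3) P3)
  qed
qed

lemma unimod_carrier: "unimod R n V \<Longrightarrow> V \<in> carrier_mat n n" unfolding unimod_def by auto
lemma unimod_Rmat: "unimod R n V \<Longrightarrow> Rmat R V" unfolding unimod_def by auto

lemma row_clear:
  assumes X: "X \<in> carrier_mat p n" "Rmat R X" and t: "t < p"
    and H: "\<forall>i<t. \<forall>c. i < c \<and> c < n \<longrightarrow> X$$(i,c) = 0"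
  shows "\<exists>V. unimod R n V \<and> (\<forall>i<t. \<forall>c. i < c \<and> c < n \<longrightarrow> (X*V)$$(i,c) = 0) \<and>
     (\<forall>c. t < c \<and> c < t + 1 + q \<and> c < n \<longrightarrow> (X*V)$$(t,c) = 0)"
proof (induction q)
  case 0
  show ?case using H X by (intro exI[of _ "1\<^sub>m n"]) (auto simp: unimod_one)
next
  case (Suc q)
  then obtain V where V: "unimod R n V" "\<forall>i<t. \<forall>c. i < c \<and> c < n \<longrightarrow> (X*V)$$(i,c) = 0"
     "\<forall>c. t < c \<and> c < t + 1 + q \<and> c < n \<longrightarrow> (X*V)$$(t,c) = 0" by blast
  show ?case
  proof (cases "t + 1 + q < n")
    case False
    show ?thesis using V False by (intro exI[of _ V]) auto
  next
    case True
    define Z where "Z = X * V"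
    have Zc: "Z \<in> carrier_mat p n" unfolding Z_def using X unimod_carrier[OF V(1)] by auto
    have RZ: "Rmat R Z" unfolding Z_def using X unimod_carrier[OF V(1)] unimod_Rmat[OF V(1)]
      by (intro Rmat_mult) auto
    obtain W where W: "unimod R n W" "\<forall>i<p. \<forall>c<n. c \<noteq> t \<and> c \<noteq> t+1+q \<longrightarrow> (Z*W)$$(i,c) = Z$$(i,c)"
     "(Z*W)$$(t,t+1+q) = 0" "\<forall>i<p. Z$$(i,t) = 0 \<and> Z$$(i,t+1+q) = 0 \<longrightarrow> (Z*W)$$(i,t) = 0 \<and> (Z*W)$$(i,t+1+q) = 0"
    proof -
      have tn: "t < n" "t \<noteq> t+1+q" using True by auto
      show ?thesis using two_col[OF Zc RZ tn(1) True tn(2) t] that by blast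
    qed
    have XVW: "X * (V * W) = Z * W" unfolding Z_def using X unimod_carrier[OF V(1)] unimod_carrier[OF W(1)]
      by (simp add: assoc_mult_mat[of X p n V n W n])
    have P1: "\<forall>i<t. \<forall>c. i < c \<and> c < n \<longrightarrow> (Z*W)$$(i,c) = 0"
    proof (intro allI impI)
      fix i c assume ic: "i < t" "i < c \<and> c < n"
      have z: "Z$$(i,t) = 0" "Z$$(i,t+1+q) = 0" using V(2) ic True unfolding Z_def by auto
      show "(Z*W)$$(i,c) = 0"
      proof (cases "c = t \<or> c = t+1+q")
        case True thus ?thesis using W(4) z ic t by auto
      next
        case False thus ?thesis using W(2) V(2) ic t unfolding Z_def by auto
      qed
    qed
    have P2: "\<forall>c. t < c \<and> c < t + 1 + Suc q \<and> c < n \<longrightarrow> (Z*W)$$(t,c) = 0"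
    proof (intro allI impI)
      fix c assume c: "t < c \<and> c < t + 1 + Suc q \<and> c < n"
      show "(Z*W)$$(t,c) = 0"
      proof (cases "c = t+1+q")
        case True thus ?thesis using W(3) by simp
      next
        case False thus ?thesis using W(2) V(3) c t unfolding Z_def by auto
      qed
    qed
    show ?thesis
      by (rule exI[of _ "V * W"], unfold XVW) (intro conjI unimod_mult[OF V(1) W(1)] P1 P2)
  qed
qed

lemma stair:
  assumes X: "X \<in> carrier_mat p n" "Rmat R X"
  shows "t \<le> p \<Longrightarrow> \<exists>V. unimod R n V \<and> (\<forall>i<t. \<forall>c. i < c \<and> c < n \<longrightarrow> (X*V)$$(i,c) = 0)"
proof (induction t)
  case 0
  show ?case by (intro exI[of _ "1\<^sub>m n"]) (auto simp: unimod_one)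
next
  case (Suc t)
  then obtain V where V: "unimod R n V" "\<forall>i<t. \<forall>c. i < c \<and> c < n \<longrightarrow> (X*V)$$(i,c) = 0" by auto
  define Z where "Z = X * V"
  have Zc: "Z \<in> carrier_mat p n" unfolding Z_def using X unimod_carrier[OF V(1)] by auto
  have RZ: "Rmat R Z" unfolding Z_def using X unimod_carrier[OF V(1)] unimod_Rmat[OF V(1)]
    by (intro Rmat_mult) auto
  obtain W where W: "unimod R n W" "\<forall>i<t. \<forall>c. i < c \<and> c < n \<longrightarrow> (Z*W)$$(i,c) = 0"
     "\<forall>c. t < c \<and> c < t + 1 + n \<and> c < n \<longrightarrow> (Z*W)$$(t,c) = 0"
    using row_clear[OF Zc RZ _ V(2)[folded Z_def], of n] Suc.prems by auto
  have XVW: "X * (V * W) = Z * W" unfolding Z_def using X unimod_carrier[OF V(1)] unimod_carrier[OF W(1)]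
    by (simp add: assoc_mult_mat[of X p n V n W n])
  have P: "\<forall>i<Suc t. \<forall>c. i < c \<and> c < n \<longrightarrow> (Z*W)$$(i,c) = 0"
    using W(2,3) by (metis less_Suc_eq trans_less_add2)
  show ?case
    by (rule exI[of _ "V * W"], unfold XVW) (intro conjI unimod_mult[OF V(1) W(1)] P)
qed

lemma reduce:
  assumes X: "X \<in> carrier_mat p n" "Rmat R X"
  shows "\<exists>V. unimod R n V \<and> (\<forall>i<p. \<forall>c. p \<le> c \<and> c < n \<longrightarrow> (X*V)$$(i,c) = 0)"
proof -
  obtain V where "unimod R n V" "\<forall>i<p. \<forall>c. i < c \<and> c < n \<longrightarrow> (X*V)$$(i,c) = 0"
    using stair[OF X le_refl] by blast
  thus ?thesis by (intro exI[of _ V]) auto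
qed

end

definition lc :: "nat \<Rightarrow> complex vec list \<Rightarrow> (nat \<Rightarrow> complex) \<Rightarrow> complex vec" where
  "lc n bs c = vec n (\<lambda>r. \<Sum>i<length bs. c i * bs ! i $ r)"

lemma finsum_lc: assumes "set bs \<subseteq> carrier_vec n"
  shows "finsum_vec TYPE(complex) n (\<lambda>i. c i \<cdot>\<^sub>v bs ! i) {0..<length bs} = lc n bs c"
proof -
  have B: "\<And>x. x < length bs \<Longrightarrow> bs ! x \<in> carrier_vec n" using assms nth_mem by blast
  have F: "(\<lambda>i. c i \<cdot>\<^sub>v bs ! i) \<in> {0..<length bs} \<rightarrow> carrier_vec n" using B by simp
  have C: "finsum_vec TYPE(complex) n (\<lambda>i. c i \<cdot>\<^sub>v bs ! i) {0..<length bs} \<in> carrier_vec n"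
    by (rule finsum_vec_closed[OF F])
  show ?thesis
  proof (rule eq_vecI)
    show "dim_vec (finsum_vec TYPE(complex) n (\<lambda>i. c i \<cdot>\<^sub>v bs ! i) {0..<length bs}) = dim_vec (lc n bs c)"
      using C unfolding lc_def by simp
    fix r assume r: "r < dim_vec (lc n bs c)"
    hence r': "r < n" unfolding lc_def by simp
    have "finsum_vec TYPE(complex) n (\<lambda>i. c i \<cdot>\<^sub>v bs ! i) {0..<length bs} $ r = (\<Sum>f\<in>{0..<length bs}. (c f \<cdot>\<^sub>v bs ! f) $ r)"
      by (rule index_finsum_vec[OF _ r' F]) simp
    also have "\<dots> = (\<Sum>f\<in>{0..<length bs}. c f * bs ! f $ r)"
    proof (rule sum.cong[OF refl])
      fix f assume "f \<in> {0..<length bs}"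
      hence "dim_vec (bs ! f) = n" using B by fastforce
      thus "(c f \<cdot>\<^sub>v bs ! f) $ r = c f * bs ! f $ r" using r' by simp
    qed
    also have "\<dots> = lc n bs c $ r" unfolding lc_def using r' by (simp add: atLeast0LessThan)
    finally show "finsum_vec TYPE(complex) n (\<lambda>i. c i \<cdot>\<^sub>v bs ! i) {0..<length bs} $ r = lc n bs c $ r" .
  qed
qed

lemma pick_interval: "j < k \<Longrightarrow> pick {0..<k} j = j"
proof -
  assume j: "j < k"
  have "card {a \<in> {0..<k}. a < j} = j"
  proof -
    have "{a \<in> {0..<k}. a < j} = {0..<j}" using j by auto
    thus ?thesis by simp
  qed
  thus ?thesis using pick_card_in_set[of j "{0..<k}"] j by simp
qed

context gr begin

lemma rows_minor:
  assumes A: "A \<in> carrier_mat n k" and RA: "Rmat R A"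
    and d: "\<forall>m\<in>minors k A. R_dvd R d m"
    and f: "\<And>i. i < k \<Longrightarrow> f i < n"
  shows "R_dvd R d (det (mat\<^sub>r k k (\<lambda>i. row A (f i))))"
proof (cases "inj_on f {0..<k}")
  case False
  then obtain i j where ij: "i < k" "j < k" "i \<noteq> j" "f i = f j" unfolding inj_on_def by auto
  have "det (mat\<^sub>r k k (\<lambda>i. row A (f i))) = 0"
    by (rule det_identical_rows[OF _ ij(3) ij(1) ij(2)]) (use ij A in auto)
  thus ?thesis by (simp add: dvd_zero)
next
  case True
  define I where "I = f ` {0..<k}"
  have cI: "card I = k" unfolding I_def using card_image[OF True] by simp
  have In: "I \<subseteq> {0..<n}" unfolding I_def using f by auto
  have fin: "finite I" unfolding I_def by auto
  define S where "S = submatrix A I {0..<k}"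
  have dA: "dim_row A = n" "dim_col A = k" using A by auto
  have c1: "card {i. i < dim_row A \<and> i \<in> I} = k"
  proof -
    have "{i. i < n \<and> i \<in> I} = I" using In by auto
    thus ?thesis using cI dA by simp
  qed
  have c2: "card {j. j < dim_col A \<and> j \<in> {0..<k}} = k"
  proof -
    have "{j. j < k \<and> j \<in> {0..<k}} = {0..<k}" by auto
    thus ?thesis using dA by simp
  qed
  have S: "S \<in> carrier_mat k k" by (rule carrier_matI) (simp_all only: S_def dim_submatrix c1 c2)
  have Sij: "S $$ (a,b) = A $$ (pick I a, b)" if "a < k" "b < k" for a b
    unfolding S_def using submatrix_index[of a A I b "{0..<k}"] c1 c2 that pick_interval[OF that(2)] by simp
  have mS: "det S \<in> minors k A" unfolding minors_def S_def using In cI A by auto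
  define p where "p = (\<lambda>i. if i < k then card {a\<in>I. a < f i} else i)"
  have pick_p: "pick I (p i) = f i" if "i < k" for i
    unfolding p_def using that pick_card_in_set[of "f i" I] I_def by auto
  have p_lt: "p i < k" if "i < k" for i
  proof -
    have "{a\<in>I. a < f i} \<subset> I" using that I_def by auto
    hence "card {a\<in>I. a < f i} < card I" using fin by (simp add: psubset_card_mono)
    thus ?thesis unfolding p_def using that cI by simp
  qed
  have pinj: "inj_on p {0..<k}"
  proof (rule inj_onI)
    fix x y assume "x \<in> {0..<k}" "y \<in> {0..<k}" "p x = p y"
    hence "f x = f y" using pick_p by (metis atLeastLessThan_iff)
    thus "x = y" using True \<open>x \<in> _\<close> \<open>y \<in> _\<close> unfolding inj_on_def by blast
  qed
  have pfun: "p \<in> {0..<k} \<rightarrow> {0..<k}" using p_lt by auto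
  have pp: "p permutes {0..<k}"
    by (rule inj_on_nat_permutes[OF pinj pfun]) (auto simp: p_def)
  have eq: "mat\<^sub>r k k (\<lambda>i. row A (f i)) = mat k k (\<lambda>(i,j). S $$ (p i, j))"
  proof (rule eq_matI)
    fix i j assume "i < dim_row (mat k k (\<lambda>(i,j). S $$ (p i, j)))" "j < dim_col (mat k k (\<lambda>(i,j). S $$ (p i, j)))"
    hence ij: "i < k" "j < k" by auto
    have "mat\<^sub>r k k (\<lambda>i. row A (f i)) $$ (i,j) = A $$ (f i, j)" using ij dA f[OF ij(1)] by simp
    also have "\<dots> = S $$ (p i, j)" using Sij[OF p_lt[OF ij(1)] ij(2)] pick_p[OF ij(1)] by simp
    finally show "mat\<^sub>r k k (\<lambda>i. row A (f i)) $$ (i,j) = mat k k (\<lambda>(i,j). S $$ (p i, j)) $$ (i,j)" using ij by simp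
  qed auto
  have "det (mat\<^sub>r k k (\<lambda>i. row A (f i))) = of_int (sign p) * det S"
    unfolding eq by (rule det_permute_rows[OF S pp])
  thus ?thesis using d mS by (simp add: dvd_mult signof_in)
qed

lemma CB_dvd:
  assumes A: "A \<in> carrier_mat n k" and RA: "Rmat R A" and Y: "Y \<in> carrier_mat k n" and RY: "Rmat R Y"
    and d: "\<forall>m\<in>minors k A. R_dvd R d m"
  shows "R_dvd R d (det (Y * A))"
proof -
  let ?F = "{f. (\<forall>i\<in>{0..<k}. f i \<in> {0..<n}) \<and> (\<forall>i. i \<notin> {0..<k} \<longrightarrow> f i = i)}"
  have "det (Y * A) = sum (\<lambda>f. det (mat\<^sub>r k k (\<lambda> i. Y $$ (i, f i) \<cdot>\<^sub>v row A (f i)))) ?F"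
    unfolding mat_mul_finsum_alt[OF Y A]
    by (rule det_linear_rows_sum) (use A in auto)
  also have "\<dots> = sum (\<lambda>f. prod (\<lambda>i. Y $$ (i, f i)) {0..<k} * det (mat\<^sub>r k k (\<lambda> i. row A (f i)))) ?F"
    by (rule sum.cong[OF refl], rule det_rows_mul) (use A in auto)
  finally have eq: "det (Y * A) = \<dots>" .
  show ?thesis unfolding eq
  proof (rule dvd_sum)
    fix f assume "f \<in> ?F"
    hence f: "\<And>i. i < k \<Longrightarrow> f i < n" by auto
    have "prod (\<lambda>i. Y $$ (i, f i)) {0..<k} \<in> R" using RY Y f unfolding Rmat_def by (auto intro!: prod_in)
    thus "R_dvd R d (prod (\<lambda>i. Y $$ (i, f i)) {0..<k} * det (mat\<^sub>r k k (\<lambda> i. row A (f i))))"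
      using rows_minor[OF A RA d f] by (simp add: dvd_mult)
  qed
qed

end

interpretation cnj_hom: comm_ring_hom cnj
  by unfold_locales auto

definition adjm :: "complex mat \<Rightarrow> complex mat" where
  "adjm A = mat (dim_col A) (dim_row A) (\<lambda>(i,j). cnj (A $$ (j,i)))"

lemma adjm_index[simp]: "i < dim_col A \<Longrightarrow> j < dim_row A \<Longrightarrow> adjm A $$ (i,j) = cnj (A $$ (j,i))"
  and adjm_dim[simp]: "dim_row (adjm A) = dim_col A" "dim_col (adjm A) = dim_row A"
  unfolding adjm_def by auto

lemma adjm_carrier: "A \<in> carrier_mat n m \<Longrightarrow> adjm A \<in> carrier_mat m n"
  unfolding carrier_mat_def by simp

lemma det_adjm: assumes "A \<in> carrier_mat n n" shows "det (adjm A) = cnj (det A)"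
proof -
  have "adjm A = transpose_mat (map_mat cnj A)"
    by (rule eq_matI) (use assms in auto)
  thus ?thesis using det_transpose[of "map_mat cnj A" n] assms by simp
qed

lemma sum_shift: fixes k n :: nat assumes "k \<le> n" "\<And>c. c < k \<Longrightarrow> g c = 0"
  shows "(\<Sum>c<n. g c) = (\<Sum>i<n-k. g (k+i))"
proof -
  have "(\<Sum>c<n. g c) = (\<Sum>c\<in>{0..<k}. g c) + (\<Sum>c\<in>{k..<n}. g c)"
    using assms(1) by (simp add: atLeast0LessThan[symmetric] sum.atLeastLessThan_concat)
  also have "(\<Sum>c\<in>{0..<k}. g c) = 0" using assms(2) by simp
  also have "(\<Sum>c\<in>{k..<n}. g c) = (\<Sum>i<n-k. g (k+i))"
  proof -
    have "(\<Sum>c\<in>{k..<n}. g c) = (\<Sum>c\<in>{0+k..<(n-k)+k}. g c)" using assms(1) by simp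
    also have "\<dots> = (\<Sum>i\<in>{0..<n-k}. g (i+k))" by (rule sum.shift_bounds_nat_ivl)
    finally show ?thesis by (simp add: atLeast0LessThan add.commute)
  qed
  finally show ?thesis by simp
qed

lemma pad_le: fixes P Q :: "complex mat" assumes P: "P \<in> carrier_mat N m" and Q: "Q \<in> carrier_mat m N" and PQ: "P * Q = 1\<^sub>m N"
  shows "N \<le> m"
proof (rule ccontr)
  assume "\<not> N \<le> m"
  hence mN: "m < N" by simp
  define Pp where "Pp = mat N N (\<lambda>(a,b). if b < m then P $$ (a,b) else 0)"
  define Qp where "Qp = mat N N (\<lambda>(a,b). if a < m then Q $$ (a,b) else 0)"
  have "Pp * Qp = P * Q"
  proof (rule eq_matI)
    fix a b assume ab: "a < dim_row (P * Q)" "b < dim_col (P * Q)"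
    hence ab': "a < N" "b < N" using P Q by auto
    have "(Pp * Qp) $$ (a,b) = (\<Sum>c<N. Pp $$ (a,c) * Qp $$ (c,b))"
      using ab' unfolding Pp_def Qp_def by (simp add: scalar_prod_def atLeast0LessThan)
    also have "\<dots> = (\<Sum>c<m. P $$ (a,c) * Q $$ (c,b))"
    proof -
      have "(\<Sum>c<N. Pp $$ (a,c) * Qp $$ (c,b)) = (\<Sum>c<m. Pp $$ (a,c) * Qp $$ (c,b))"
        by (rule sum.mono_neutral_right) (use mN ab' in \<open>auto simp: Pp_def Qp_def\<close>)
      also have "\<dots> = (\<Sum>c<m. P $$ (a,c) * Q $$ (c,b))"
        by (rule sum.cong) (use mN ab' in \<open>auto simp: Pp_def Qp_def\<close>)
      finally show ?thesis .
    qed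
    also have "\<dots> = (P * Q) $$ (a,b)" using ab' P Q by (simp add: scalar_prod_def atLeast0LessThan)
    finally show "(Pp * Qp) $$ (a,b) = (P * Q) $$ (a,b)" .
  qed (use P Q in \<open>auto simp: Pp_def Qp_def\<close>)
  hence "det (Pp * Qp) = 1" using PQ by simp
  moreover have "det Pp = 0"
  proof -
    have "Pp *\<^sub>v unit_vec N (N-1) = 0\<^sub>v N"
      by (rule eq_vecI) (use mN in \<open>auto simp: Pp_def scalar_prod_def unit_vec_def intro!: sum.neutral\<close>)
    moreover have "unit_vec N (N-1) \<noteq> (0\<^sub>v N ::complex vec)"
    proof
      assume "unit_vec N (N-1) = (0\<^sub>v N ::complex vec)"
      hence "unit_vec N (N-1) $ (N-1) = (0\<^sub>v N ::complex vec) $ (N-1)" by simp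
      thus False using mN by simp
    qed
    moreover have "unit_vec N (N-1) \<in> carrier_vec N" by simp
    moreover have "Pp \<in> carrier_mat N N" unfolding Pp_def by simp
    ultimately show ?thesis
      using det_0_iff_vec_prod_zero[of Pp N] by blast
  qed
  ultimately show False using det_mult[of Pp N Qp] unfolding Pp_def Qp_def by auto
qed

definition coef :: "complex set \<Rightarrow> nat \<Rightarrow> (nat \<Rightarrow> complex) \<Rightarrow> bool" where
  "coef R N c \<longleftrightarrow> (\<forall>i<N. c i \<in> R) \<and> (\<forall>i\<ge>N. c i = 0)"

lemma basis_lc: assumes "L \<subseteq> carrier_vec n"
  shows "is_R_basis R n L bs \<longleftrightarrow> set bs \<subseteq> L \<and> (\<forall>w\<in>L. \<exists>!c. coef R (length bs) c \<and> w = lc n bs c)"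
proof
  assume B: "is_R_basis R n L bs"
  hence "set bs \<subseteq> carrier_vec n" using assms unfolding is_R_basis_def by auto
  thus "set bs \<subseteq> L \<and> (\<forall>w\<in>L. \<exists>!c. coef R (length bs) c \<and> w = lc n bs c)"
    using B unfolding is_R_basis_def coef_def finsum_lc[OF \<open>set bs \<subseteq> carrier_vec n\<close>] by simp
next
  assume B: "set bs \<subseteq> L \<and> (\<forall>w\<in>L. \<exists>!c. coef R (length bs) c \<and> w = lc n bs c)"
  hence "set bs \<subseteq> carrier_vec n" using assms by auto
  thus "is_R_basis R n L bs"
    using B unfolding is_R_basis_def coef_def finsum_lc[OF \<open>set bs \<subseteq> carrier_vec n\<close>] by simp
qed

lemma lc_index: "r < n \<Longrightarrow> lc n bs c $ r = (\<Sum>i<length bs. c i * bs ! i $ r)"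
  unfolding lc_def by simp

lemma lc_carrier: "lc n bs c \<in> carrier_vec n" unfolding lc_def by simp

context gr begin

lemma compose:
  assumes Lc: "L \<subseteq> carrier_vec n" and B': "is_R_basis R n L bs'" and bsc: "set bs \<subseteq> carrier_vec n"
    and C: "\<forall>i<length bs'. coef R (length bs) (C i) \<and> bs' ! i = lc n bs (C i)"
    and D: "\<forall>j<length bs. coef R (length bs') (D j) \<and> bs ! j = lc n bs' (D j)"
  shows "\<forall>i<length bs'. \<forall>l<length bs'. (\<Sum>j<length bs. D j l * C i j) = (if l = i then 1 else 0)"
proof (intro allI impI)
  fix i l assume i: "i < length bs'" and l: "l < length bs'"
  let ?m = "length bs'" and ?N = "length bs"
  have B'': "set bs' \<subseteq> L" "\<forall>w\<in>L. \<exists>!c. coef R ?m c \<and> w = lc n bs' c" using B' basis_lc[OF Lc] by auto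
  have bsi: "bs' ! i \<in> L" using B''(1) i by auto
  hence bsic: "bs' ! i \<in> carrier_vec n" using Lc by auto
  have uniq: "\<exists>!c. coef R ?m c \<and> bs' ! i = lc n bs' c" using B''(2) bsi by blast
  define e1 where "e1 = (\<lambda>l. if l < ?m then (\<Sum>j<?N. D j l * C i j) else 0)"
  define e2 where "e2 = (\<lambda>l. if l = i then 1 else (0::complex))"
  have ce1: "coef R ?m e1" unfolding coef_def e1_def
  proof (intro conjI allI impI)
    fix l assume "l < ?m"
    have "D j l * C i j \<in> R" if "j < ?N" for j
      using C D i that \<open>l < ?m\<close> unfolding coef_def by (intro mult) auto
    thus "(if l < ?m then (\<Sum>j<?N. D j l * C i j) else 0) \<in> R" using \<open>l < ?m\<close> by (auto intro!: sum_in)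
  qed auto
  have ce2: "coef R ?m e2" unfolding coef_def e2_def using i by auto
  have le1: "bs' ! i = lc n bs' e1"
  proof (rule eq_vecI)
    show "dim_vec (bs' ! i) = dim_vec (lc n bs' e1)" using bsic lc_carrier[of n bs' e1] by simp
    fix r assume "r < dim_vec (lc n bs' e1)"
    hence r: "r < n" using lc_carrier[of n bs' e1] by simp
    have "lc n bs' e1 $ r = (\<Sum>l<?m. (\<Sum>j<?N. D j l * C i j) * bs' ! l $ r)"
      unfolding lc_index[OF r] e1_def by simp
    also have "\<dots> = (\<Sum>l<?m. \<Sum>j<?N. C i j * (D j l * bs' ! l $ r))"
      by (rule sum.cong[OF refl]) (simp add: sum_distrib_left sum_distrib_right mult_ac)
    also have "\<dots> = (\<Sum>j<?N. \<Sum>l<?m. C i j * (D j l * bs' ! l $ r))"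
      by (rule sum.swap)
    also have "\<dots> = (\<Sum>j<?N. C i j * bs ! j $ r)"
    proof (rule sum.cong[OF refl])
      fix j assume "j \<in> {..<?N}"
      hence "bs ! j $ r = (\<Sum>l<?m. D j l * bs' ! l $ r)" using D lc_index[OF r] by auto
      thus "(\<Sum>l<?m. C i j * (D j l * bs' ! l $ r)) = C i j * bs ! j $ r" by (simp add: sum_distrib_left)
    qed
    also have "\<dots> = bs' ! i $ r" using C i lc_index[OF r] by auto
    finally show "bs' ! i $ r = lc n bs' e1 $ r" by simp
  qed
  have le2: "bs' ! i = lc n bs' e2"
  proof (rule eq_vecI)
    show "dim_vec (bs' ! i) = dim_vec (lc n bs' e2)" using bsic lc_carrier[of n bs' e2] by simp
    fix r assume "r < dim_vec (lc n bs' e2)"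
    hence r: "r < n" using lc_carrier[of n bs' e2] by simp
    show "bs' ! i $ r = lc n bs' e2 $ r"
    proof -
      have "(\<Sum>l<?m. (if l = i then 1 else 0) * bs' ! l $ r) = (\<Sum>l<?m. if l = i then bs' ! l $ r else 0)"
        by (rule sum.cong) auto
      also have "\<dots> = bs' ! i $ r" using i by simp
      finally show ?thesis unfolding lc_index[OF r] e2_def by simp
    qed
  qed
  have "e1 = e2" using uniq ce1 ce2 le1 le2 by blast
  hence "e1 l = e2 l" by simp
  thus "(\<Sum>j<?N. D j l * C i j) = (if l = i then 1 else 0)" using l unfolding e1_def e2_def by simp
qed

lemma basis_change:
  assumes Lc: "L \<subseteq> carrier_vec n" and B: "is_R_basis R n L bs" and B': "is_R_basis R n L bs'"
  shows "length bs' = length bs \<and> det (gram bs') = det (gram bs)"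
proof -
  let ?m = "length bs'" and ?N = "length bs"
  have Bs: "set bs \<subseteq> L" "\<forall>w\<in>L. \<exists>!c. coef R ?N c \<and> w = lc n bs c" using B basis_lc[OF Lc] by auto
  have Bs': "set bs' \<subseteq> L" "\<forall>w\<in>L. \<exists>!c. coef R ?m c \<and> w = lc n bs' c" using B' basis_lc[OF Lc] by auto
  have bsc: "set bs \<subseteq> carrier_vec n" "set bs' \<subseteq> carrier_vec n" using Bs(1) Bs'(1) Lc by auto
  have "\<forall>i\<in>{..<?m}. \<exists>c. coef R ?N c \<and> bs' ! i = lc n bs c"
  proof
    fix i assume "i \<in> {..<?m}"
    hence "bs' ! i \<in> L" using Bs'(1) by auto
    thus "\<exists>c. coef R ?N c \<and> bs' ! i = lc n bs c" using Bs(2) by blast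
  qed
  from bchoice[OF this] obtain C where C0: "\<forall>i\<in>{..<?m}. coef R ?N (C i) \<and> bs' ! i = lc n bs (C i)" by blast
  hence C: "\<forall>i<?m. coef R ?N (C i) \<and> bs' ! i = lc n bs (C i)" by blast
  have "\<forall>i\<in>{..<?N}. \<exists>c. coef R ?m c \<and> bs ! i = lc n bs' c"
  proof
    fix i assume "i \<in> {..<?N}"
    hence "bs ! i \<in> L" using Bs(1) by auto
    thus "\<exists>c. coef R ?m c \<and> bs ! i = lc n bs' c" using Bs'(2) by blast
  qed
  from bchoice[OF this] obtain D where D0: "\<forall>i\<in>{..<?N}. coef R ?m (D i) \<and> bs ! i = lc n bs' (D i)" by blast
  hence D: "\<forall>i<?N. coef R ?m (D i) \<and> bs ! i = lc n bs' (D i)" by blast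
  have QP: "\<forall>i<?m. \<forall>l<?m. (\<Sum>j<?N. D j l * C i j) = (if l = i then 1 else 0)"
    by (rule compose[OF Lc B' bsc(1) C D])
  have PQ: "\<forall>i<?N. \<forall>l<?N. (\<Sum>j<?m. C j l * D i j) = (if l = i then 1 else 0)"
    by (rule compose[OF Lc B bsc(2) D C])
  define Pm where "Pm = mat ?N ?m (\<lambda>(j,i). C i j)"
  define Qm where "Qm = mat ?m ?N (\<lambda>(l,j). D j l)"
  have Pc: "Pm \<in> carrier_mat ?N ?m" and Qc: "Qm \<in> carrier_mat ?m ?N" unfolding Pm_def Qm_def by auto
  have QPm: "Qm * Pm = 1\<^sub>m ?m"
  proof (rule eq_matI)
    fix a b assume "a < dim_row (1\<^sub>m ?m)" "b < dim_col (1\<^sub>m ?m)"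
    hence ab: "a < ?m" "b < ?m" by auto
    have "(Qm * Pm) $$ (a,b) = (\<Sum>j<?N. D j a * C b j)"
      using ab unfolding Pm_def Qm_def by (simp add: scalar_prod_def atLeast0LessThan)
    also have "\<dots> = (if a = b then 1 else 0)" using QP ab by auto
    finally show "(Qm * Pm) $$ (a,b) = 1\<^sub>m ?m $$ (a,b)" using ab by simp
  qed (use Pc Qc in auto)
  have PQm: "Pm * Qm = 1\<^sub>m ?N"
  proof (rule eq_matI)
    fix a b assume "a < dim_row (1\<^sub>m ?N)" "b < dim_col (1\<^sub>m ?N)"
    hence ab: "a < ?N" "b < ?N" by auto
    have "(Pm * Qm) $$ (a,b) = (\<Sum>j<?m. C j a * D b j)"
      using ab unfolding Pm_def Qm_def by (simp add: scalar_prod_def atLeast0LessThan)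
    also have "\<dots> = (if a = b then 1 else 0)" using PQ ab by auto
    finally show "(Pm * Qm) $$ (a,b) = 1\<^sub>m ?N $$ (a,b)" using ab by simp
  qed (use Pc Qc in auto)
  have mN: "?m = ?N" using pad_le[OF Pc Qc PQm] pad_le[OF Qc Pc QPm] by simp
  have Pc': "Pm \<in> carrier_mat ?N ?N" using Pc mN by simp
  have Qc': "Qm \<in> carrier_mat ?N ?N" using Qc mN by simp
  have "det Pm * det Qm = 1" using det_mult[OF Pc' Qc'] PQm by simp
  moreover have "Rmat R Pm" "Rmat R Qm" using C D unfolding Rmat_def Pm_def Qm_def coef_def by auto
  ultimately have nP: "cmod (det Pm) = 1" using unit_norm Rmat_det by blast
  have Gc: "gram bs \<in> carrier_mat ?N ?N" unfolding gram_def by simp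
  have bsd: "\<And>i. i < ?N \<Longrightarrow> dim_vec (bs ! i) = n" "\<And>i. i < ?m \<Longrightarrow> dim_vec (bs' ! i) = n"
    using bsc nth_mem by (metis carrier_vecD subsetD)+
  have geq: "gram bs' = adjm Pm * gram bs * Pm"
  proof (rule eq_matI)
    fix i j assume "i < dim_row (adjm Pm * gram bs * Pm)" "j < dim_col (adjm Pm * gram bs * Pm)"
    hence ij: "i < ?N" "j < ?N" using Pc mN by auto
    hence ij': "i < ?m" "j < ?m" using mN by auto
    have ex: "bs' ! a $ r = (\<Sum>c<?N. C a c * bs ! c $ r)" if "a < ?m" "r < n" for a r
      using C that lc_index[OF that(2)] by auto
    have "gram bs' $$ (i,j) = (\<Sum>r<n. cnj (bs' ! i $ r) * bs' ! j $ r)"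
      unfolding gram_def hinner_def using ij' bsd by simp
    also have "\<dots> = (\<Sum>r<n. \<Sum>a<?N. \<Sum>c<?N. cnj (C i a) * C j c * (cnj (bs ! a $ r) * bs ! c $ r))"
    proof (rule sum.cong[OF refl])
      fix r assume "r \<in> {..<n}"
      hence r: "r < n" by simp
      show "cnj (bs' ! i $ r) * bs' ! j $ r = (\<Sum>a<?N. \<Sum>c<?N. cnj (C i a) * C j c * (cnj (bs ! a $ r) * bs ! c $ r))"
        unfolding ex[OF ij'(1) r] ex[OF ij'(2) r] cnj_sum sum_product
        by (rule sum.cong[OF refl], rule sum.cong[OF refl]) (simp add: mult_ac)
    qed
    also have "\<dots> = (\<Sum>a<?N. \<Sum>r<n. \<Sum>c<?N. cnj (C i a) * C j c * (cnj (bs ! a $ r) * bs ! c $ r))"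
      by (rule sum.swap)
    also have "\<dots> = (\<Sum>a<?N. \<Sum>c<?N. \<Sum>r<n. cnj (C i a) * C j c * (cnj (bs ! a $ r) * bs ! c $ r))"
      by (rule sum.cong[OF refl], rule sum.swap)
    also have "\<dots> = (\<Sum>c<?N. \<Sum>a<?N. \<Sum>r<n. cnj (C i a) * C j c * (cnj (bs ! a $ r) * bs ! c $ r))"
      by (rule sum.swap)
    also have "\<dots> = (\<Sum>c<?N. (\<Sum>a<?N. cnj (C i a) * gram bs $$ (a,c)) * C j c)"
    proof (rule sum.cong[OF refl])
      fix c assume c: "c \<in> {..<?N}"
      have "(\<Sum>a<?N. cnj (C i a) * gram bs $$ (a,c)) * C j c = (\<Sum>a<?N. cnj (C i a) * gram bs $$ (a,c) * C j c)"
        by (simp add: sum_distrib_right)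
      also have "\<dots> = (\<Sum>a<?N. \<Sum>r<n. cnj (C i a) * C j c * (cnj (bs ! a $ r) * bs ! c $ r))"
      proof (rule sum.cong[OF refl])
        fix a assume a: "a \<in> {..<?N}"
        have "gram bs $$ (a,c) = (\<Sum>r<n. cnj (bs ! a $ r) * bs ! c $ r)"
          unfolding gram_def hinner_def using a c bsd by simp
        thus "cnj (C i a) * gram bs $$ (a,c) * C j c = (\<Sum>r<n. cnj (C i a) * C j c * (cnj (bs ! a $ r) * bs ! c $ r))"
          by (simp add: sum_distrib_left sum_distrib_right mult_ac)
      qed
      finally show "(\<Sum>a<?N. \<Sum>r<n. cnj (C i a) * C j c * (cnj (bs ! a $ r) * bs ! c $ r)) = (\<Sum>a<?N. cnj (C i a) * gram bs $$ (a,c)) * C j c" by simp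
    qed
    also have "\<dots> = (adjm Pm * gram bs * Pm) $$ (i,j)"
      using ij Pc Gc mN unfolding Pm_def by (simp add: scalar_prod_def atLeast0LessThan)
    finally show "gram bs' $$ (i,j) = (adjm Pm * gram bs * Pm) $$ (i,j)" .
  qed (use Pc Gc mN in \<open>auto simp: gram_def\<close>)
  have "det (gram bs') = det (adjm Pm) * det (gram bs) * det Pm"
    unfolding geq using adjm_carrier[OF Pc'] Gc Pc'
    by (simp add: det_mult[of _ ?N])
  also have "\<dots> = (det Pm * cnj (det Pm)) * det (gram bs)" unfolding det_adjm[OF Pc'] by (simp add: mult_ac)
  also have "det Pm * cnj (det Pm) = 1" unfolding complex_norm_square[symmetric] nP by simp
  finally show ?thesis using mN by simp
qed

end

context gr begin

lemma main_gr:
  assumes k1: "1 \<le> k" and kn: "k < n" and ic: "icube R n k lam A"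
  shows "(\<exists>bs. length bs = n - k \<and> is_R_basis R n (orth_lattice R n k A) bs)
       \<and> (\<exists>d. is_det_divisor R k A d)
       \<and> (\<forall>bs d. is_R_basis R n (orth_lattice R n k A) bs \<longrightarrow> is_det_divisor R k A d \<longrightarrow>
            det (gram bs) = complex_of_real (lam ^ k / (cmod d)\<^sup>2))"
proof -
  have Ac: "A \<in> carrier_mat n k" and lam: "lam > 0"
    and orth: "\<forall>i<k. \<forall>j<k. hinner (col A i) (col A j) = (if i = j then complex_of_real lam else 0)"
    using ic unfolding icube_def by auto
  have RA: "Rmat R A" using ic Ac unfolding icube_def Rmat_def by auto
  have Aent: "\<And>i j. i < n \<Longrightarrow> j < k \<Longrightarrow> A $$ (i,j) \<in> R" using ic unfolding icube_def by auto
  define X where "X = adjm A"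
  have Xc: "X \<in> carrier_mat k n" unfolding X_def using adjm_carrier[OF Ac] .
  have Xi: "\<And>b r. b < k \<Longrightarrow> r < n \<Longrightarrow> X $$ (b,r) = cnj (A $$ (r,b))" unfolding X_def using Ac by auto
  have RX: "Rmat R X" unfolding Rmat_def using Xc Xi Aent by auto
  have hX: "hinner (col A j) w = (X *\<^sub>v w) $ j" if "w \<in> carrier_vec n" "j < k" for w j
  proof -
    have "hinner (col A j) w = (\<Sum>i<n. cnj (A $$ (i,j)) * w $ i)"
      unfolding hinner_def using Ac that by simp
    also have "\<dots> = (X *\<^sub>v w) $ j"
      using that Xc Xi by (simp add: scalar_prod_def atLeast0LessThan)
    finally show ?thesis .
  qed
  have XA: "(X * A) $$ (a,b) = (if a = b then complex_of_real lam else 0)" if "a < k" "b < k" for a b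
  proof -
    have "(X * A) $$ (a,b) = (X *\<^sub>v col A b) $ a" using that Xc Ac by simp
    also have "\<dots> = hinner (col A a) (col A b)" using hX[of "col A b" a] that Ac by simp
    finally show ?thesis using orth that by simp
  qed
  obtain V where V: "unimod R n V" and K0': "\<forall>i<k. \<forall>c. k \<le> c \<and> c < n \<longrightarrow> (X*V)$$(i,c) = 0"
    using reduce[OF Xc RX] by blast
  obtain W where W: "unimod R n W" and VW: "V * W = 1\<^sub>m n" and WV: "W * V = 1\<^sub>m n"
    using unimod_inv[OF V] by blast
  have Vc: "V \<in> carrier_mat n n" and RV: "Rmat R V" using V unfolding unimod_def by auto
  have Wc: "W \<in> carrier_mat n n" and RW: "Rmat R W" using W unfolding unimod_def by auto
  have Vent: "\<And>i j. i < n \<Longrightarrow> j < n \<Longrightarrow> V $$ (i,j) \<in> R" using RV Vc unfolding Rmat_def by auto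
  have Went: "\<And>i j. i < n \<Longrightarrow> j < n \<Longrightarrow> W $$ (i,j) \<in> R" using RW Wc unfolding Rmat_def by auto
  define K where "K = X * V"
  have Kc: "K \<in> carrier_mat k n" unfolding K_def using Xc Vc by auto
  have K0: "\<And>i c. i < k \<Longrightarrow> k \<le> c \<Longrightarrow> c < n \<Longrightarrow> K $$ (i,c) = 0" using K0' unfolding K_def by auto
  define H where "H = mat k k (\<lambda>(b,c). K $$ (b,c))"
  have Hc: "H \<in> carrier_mat k k" unfolding H_def by simp
  define P where "P = mat k k (\<lambda>(c,b). (W * A) $$ (c,b))"
  have Pc: "P \<in> carrier_mat k k" unfolding P_def by simp
  have KWA: "K * (W * A) = X * A"
  proof -
    have "K * (W * A) = X * (V * (W * A))" unfolding K_def using Xc Vc Wc Ac by (simp add: assoc_mult_mat[of X k n V n _ k])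
    also have "V * (W * A) = (V * W) * A" using Vc Wc Ac by (simp add: assoc_mult_mat[of V n n W n A k])
    also have "\<dots> = A" using VW Ac by simp
    finally show ?thesis .
  qed
  have HP: "H * P = complex_of_real lam \<cdot>\<^sub>m 1\<^sub>m k"
  proof (rule eq_matI)
    fix a b assume "a < dim_row (complex_of_real lam \<cdot>\<^sub>m 1\<^sub>m k)" "b < dim_col (complex_of_real lam \<cdot>\<^sub>m 1\<^sub>m k)"
    hence ab: "a < k" "b < k" by auto
    have "(H * P) $$ (a,b) = (\<Sum>c<k. K $$ (a,c) * (W * A) $$ (c,b))"
      using ab unfolding H_def P_def by (simp add: scalar_prod_def atLeast0LessThan)
    also have "\<dots> = (\<Sum>c<n. K $$ (a,c) * (W * A) $$ (c,b))"
      by (rule sum.mono_neutral_left) (use kn K0 ab in auto)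
    also have "\<dots> = (K * (W * A)) $$ (a,b)" using ab Kc Wc Ac by (simp add: scalar_prod_def atLeast0LessThan)
    also have "\<dots> = (if a = b then complex_of_real lam else 0)" unfolding KWA using XA ab by simp
    finally show "(H * P) $$ (a,b) = (complex_of_real lam \<cdot>\<^sub>m 1\<^sub>m k) $$ (a,b)" using ab by simp
  qed (use Hc Pc in auto)
  have detHP: "det H * det P = complex_of_real lam ^ k"
    using det_mult[OF Hc Pc] HP by simp
  have detH0: "det H \<noteq> 0" using detHP lam by auto
  define bs where "bs = map (\<lambda>i. col V (k+i)) [0..<n-k]"
  have lb: "length bs = n - k" unfolding bs_def by simp
  have bsi: "\<And>i. i < n - k \<Longrightarrow> bs ! i = col V (k+i)" unfolding bs_def by simp
  define L where "L = orth_lattice R n k A"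
  have memL: "w \<in> L \<longleftrightarrow> w \<in> carrier_vec n \<and> (\<forall>i<n. w $ i \<in> R) \<and> (\<forall>j<k. (X *\<^sub>v w) $ j = 0)" for w
    unfolding L_def orth_lattice_def vec_over_def using hX by auto
  have Lc: "L \<subseteq> carrier_vec n" using memL by auto
  have bsL: "set bs \<subseteq> L"
  proof
    fix v assume "v \<in> set bs"
    then obtain i where i: "i < n - k" "v = col V (k+i)" unfolding bs_def by auto
    have "(X *\<^sub>v col V (k+i)) $ j = 0" if "j < k" for j
    proof -
      have "(X *\<^sub>v col V (k+i)) $ j = (X * V) $$ (j, k+i)" using that i Xc Vc by simp
      thus ?thesis using K0'[rule_format, of j "k+i"] that i by simp
    qed
    thus "v \<in> L" unfolding memL using i Vc Vent by auto
  qed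
  have lcV: "lc n bs c $ r = (\<Sum>i<n-k. c i * V $$ (r, k+i))" if "r < n" for c r
    unfolding lc_index[OF that] lb using bsi that Vc by simp
  have basis: "is_R_basis R n L bs"
    unfolding basis_lc[OF Lc] lb
  proof (intro conjI bsL ballI)
    fix w assume w: "w \<in> L"
    hence wc: "w \<in> carrier_vec n" and wR: "\<And>i. i < n \<Longrightarrow> w $ i \<in> R" and wX: "\<And>j. j < k \<Longrightarrow> (X *\<^sub>v w) $ j = 0"
      using memL by auto
    define y where "y = W *\<^sub>v w"
    have yc: "y \<in> carrier_vec n" unfolding y_def using Wc wc by simp
    have yR: "y $ i \<in> R" if "i < n" for i
      unfolding y_def using that Wc wc Went wR by (auto simp: scalar_prod_def intro!: sum_in mult)
    have wy: "V *\<^sub>v y = w" unfolding y_def using Vc Wc wc VW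
      by (simp add: assoc_mult_mat_vec[of V n n W n w, symmetric])
    have Ky: "K *\<^sub>v y = X *\<^sub>v w" unfolding K_def wy[symmetric] using Xc Vc yc
      by (simp add: assoc_mult_mat_vec[of X k n V n y])
    define yt where "yt = vec k (\<lambda>c. y $ c)"
    have "H *\<^sub>v yt = 0\<^sub>v k"
    proof (rule eq_vecI)
      fix a assume "a < dim_vec (0\<^sub>v k :: complex vec)"
      hence a: "a < k" by simp
      have "(H *\<^sub>v yt) $ a = (\<Sum>c<k. K $$ (a,c) * y $ c)"
        using a unfolding H_def yt_def by (simp add: scalar_prod_def atLeast0LessThan)
      also have "\<dots> = (\<Sum>c<n. K $$ (a,c) * y $ c)"
        by (rule sum.mono_neutral_left) (use kn K0 a in auto)
      also have "\<dots> = (K *\<^sub>v y) $ a" using a Kc yc by (simp add: scalar_prod_def atLeast0LessThan)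
      also have "\<dots> = 0" unfolding Ky using wX a by simp
      finally show "(H *\<^sub>v yt) $ a = 0\<^sub>v k $ a" using a by simp
    qed (use Hc in \<open>simp add: yt_def\<close>)
    moreover have "yt \<in> carrier_vec k" unfolding yt_def by simp
    ultimately have "yt = 0\<^sub>v k" using det_0_iff_vec_prod_zero[OF Hc] detH0 by blast
    hence y0: "y $ c = 0" if "c < k" for c
    proof -
      have "yt $ c = 0" using \<open>yt = 0\<^sub>v k\<close> that by simp
      thus ?thesis unfolding yt_def using that by simp
    qed
    define c where "c = (\<lambda>i. if i < n - k then y $ (k+i) else 0)"
    have cc: "coef R (n-k) c" unfolding coef_def c_def using yR by auto
    have wc2: "w = lc n bs c"
    proof (rule eq_vecI)
      show "dim_vec w = dim_vec (lc n bs c)" using wc lc_carrier[of n bs c] by simp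
      fix r assume "r < dim_vec (lc n bs c)"
      hence r: "r < n" using lc_carrier[of n bs c] by simp
      have "w $ r = (\<Sum>c<n. V $$ (r,c) * y $ c)" unfolding wy[symmetric] using r Vc yc
        by (simp add: scalar_prod_def atLeast0LessThan)
      also have "\<dots> = (\<Sum>i<n-k. V $$ (r,k+i) * y $ (k+i))"
        by (rule sum_shift) (use kn y0 in auto)
      also have "\<dots> = lc n bs c $ r" unfolding lcV[OF r] c_def by (simp add: mult.commute)
      finally show "w $ r = lc n bs c $ r" .
    qed
    show "\<exists>!c. coef R (n-k) c \<and> w = lc n bs c"
    proof (rule ex1I[of _ c])
      show "coef R (n-k) c \<and> w = lc n bs c" using cc wc2 by simp
      fix c' assume c': "coef R (n-k) c' \<and> w = lc n bs c'"
      define z where "z = vec n (\<lambda>j. if j < k then 0 else c' (j-k) - c (j-k))"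
      have zc: "z \<in> carrier_vec n" unfolding z_def by simp
      have "V *\<^sub>v z = 0\<^sub>v n"
      proof (rule eq_vecI)
        fix r assume "r < dim_vec (0\<^sub>v n :: complex vec)"
        hence r: "r < n" by simp
        have "(V *\<^sub>v z) $ r = (\<Sum>j<n. V $$ (r,j) * z $ j)" using r Vc zc by (simp add: scalar_prod_def atLeast0LessThan)
        also have "\<dots> = (\<Sum>i<n-k. V $$ (r,k+i) * z $ (k+i))"
          by (rule sum_shift) (use kn in \<open>auto simp: z_def\<close>)
        also have "\<dots> = (\<Sum>i<n-k. c' i * V $$ (r,k+i)) - (\<Sum>i<n-k. c i * V $$ (r,k+i))"
          unfolding sum_subtractf[symmetric] by (rule sum.cong) (use kn in \<open>auto simp: z_def algebra_simps\<close>)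
        also have "\<dots> = 0" using c' wc2 lcV[OF r, of c] lcV[OF r, of c'] by simp
        finally show "(V *\<^sub>v z) $ r = 0\<^sub>v n $ r" using r by simp
      qed (use Vc in simp)
      moreover have "W *\<^sub>v 0\<^sub>v n = 0\<^sub>v n" by (rule eq_vecI) (use Wc in auto)
      ultimately have "(W * V) *\<^sub>v z = 0\<^sub>v n" using Wc Vc zc by (simp add: assoc_mult_mat_vec[of W n n V n z])
      hence z0: "z = 0\<^sub>v n" using WV zc by simp
      show "c' = c"
      proof
        fix i show "c' i = c i"
        proof (cases "i < n - k")
          case True
          have "z $ (k+i) = 0" using z0 True by simp
          thus ?thesis unfolding z_def using True by simp
        next
          case False
          thus ?thesis using c' cc unfolding coef_def by simp
        qed
      qed
    qed
  qed
  define G where "G = gram bs"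
  have Gc: "G \<in> carrier_mat (n-k) (n-k)" unfolding G_def gram_def lb by simp
  have Gi: "G $$ (i,j) = (\<Sum>r<n. cnj (V $$ (r,k+i)) * V $$ (r,k+j))" if "i < n-k" "j < n-k" for i j
    unfolding G_def gram_def hinner_def using that lb bsi Vc by simp
  have Kidx: "K $$ (a,c) = (\<Sum>r<n. cnj (A $$ (r,a)) * V $$ (r,c))" if "a < k" "c < n" for a c
    unfolding K_def using that Xc Vc Xi by (simp add: scalar_prod_def atLeast0LessThan)
  have XAidx: "(X * A) $$ (a,b) = (\<Sum>r<n. cnj (A $$ (r,a)) * A $$ (r,b))" if "a < k" "b < k" for a b
    using that Xc Ac Xi by (simp add: scalar_prod_def atLeast0LessThan)
  define M where "M = mat n n (\<lambda>(r,c). if c < k then A $$ (r,c) else V $$ (r,c))"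
  have Mc: "M \<in> carrier_mat n n" unfolding M_def by simp
  have AM: "adjm M * M = four_block_mat (complex_of_real lam \<cdot>\<^sub>m 1\<^sub>m k) (0\<^sub>m k (n-k)) (0\<^sub>m (n-k) k) G"
  proof (rule eq_matI)
    fix a b assume "a < dim_row (four_block_mat (complex_of_real lam \<cdot>\<^sub>m 1\<^sub>m k) (0\<^sub>m k (n-k)) (0\<^sub>m (n-k) k) G)"
      "b < dim_col (four_block_mat (complex_of_real lam \<cdot>\<^sub>m 1\<^sub>m k) (0\<^sub>m k (n-k)) (0\<^sub>m (n-k) k) G)"
    hence ab: "a < n" "b < n" using Gc kn by auto
    have e0: "(adjm M * M) $$ (a,b) = (\<Sum>r<n. cnj (M $$ (r,a)) * M $$ (r,b))"
      using ab Mc by (simp add: scalar_prod_def atLeast0LessThan)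
    have e2: "(\<Sum>r<n. cnj (M $$ (r,a)) * M $$ (r,b)) = (\<Sum>r<n. cnj (if a < k then A$$(r,a) else V$$(r,a)) * (if b < k then A$$(r,b) else V$$(r,b)))"
      by (rule sum.cong) (use ab in \<open>auto simp: M_def\<close>)
    note e = e0[unfolded e2]
    have fb: "four_block_mat (complex_of_real lam \<cdot>\<^sub>m 1\<^sub>m k) (0\<^sub>m k (n-k)) (0\<^sub>m (n-k) k) G $$ (a,b) =
      (if a < k then if b < k then (if a = b then complex_of_real lam else 0) else 0
       else if b < k then 0 else G $$ (a - k, b - k))"
      using ab kn Gc by simp
    show "(adjm M * M) $$ (a,b) = four_block_mat (complex_of_real lam \<cdot>\<^sub>m 1\<^sub>m k) (0\<^sub>m k (n-k)) (0\<^sub>m (n-k) k) G $$ (a,b)"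
      unfolding e fb
    proof (cases "a < k"; cases "b < k")
      assume "a < k" "b < k"
      thus "(\<Sum>r<n. cnj (if a < k then A$$(r,a) else V$$(r,a)) * (if b < k then A$$(r,b) else V$$(r,b))) = (if a < k then if b < k then (if a = b then complex_of_real lam else 0) else 0
       else if b < k then 0 else G $$ (a - k, b - k))"
        using XA XAidx by simp
    next
      assume "a < k" "\<not> b < k"
      hence "(\<Sum>r<n. cnj (if a < k then A$$(r,a) else V$$(r,a)) * (if b < k then A$$(r,b) else V$$(r,b))) = K $$ (a,b)" using Kidx ab by simp
      thus "(\<Sum>r<n. cnj (if a < k then A$$(r,a) else V$$(r,a)) * (if b < k then A$$(r,b) else V$$(r,b))) = (if a < k then if b < k then (if a = b then complex_of_real lam else 0) else 0
       else if b < k then 0 else G $$ (a - k, b - k))"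
        using K0 \<open>a < k\<close> \<open>\<not> b < k\<close> ab by simp
    next
      assume "\<not> a < k" "b < k"
      hence "(\<Sum>r<n. cnj (if a < k then A$$(r,a) else V$$(r,a)) * (if b < k then A$$(r,b) else V$$(r,b))) = cnj (K $$ (b,a))" using Kidx ab by (simp add: mult.commute)
      thus "(\<Sum>r<n. cnj (if a < k then A$$(r,a) else V$$(r,a)) * (if b < k then A$$(r,b) else V$$(r,b))) = (if a < k then if b < k then (if a = b then complex_of_real lam else 0) else 0
       else if b < k then 0 else G $$ (a - k, b - k))"
        using K0 \<open>\<not> a < k\<close> \<open>b < k\<close> ab by simp
    next
      assume "\<not> a < k" "\<not> b < k"
      thus "(\<Sum>r<n. cnj (if a < k then A$$(r,a) else V$$(r,a)) * (if b < k then A$$(r,b) else V$$(r,b))) = (if a < k then if b < k then (if a = b then complex_of_real lam else 0) else 0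
       else if b < k then 0 else G $$ (a - k, b - k))"
        using Gi[of "a-k" "b-k"] ab by simp
    qed
  qed (use Mc Gc kn in auto)
  have detAM: "det (adjm M * M) = complex_of_real lam ^ k * det G"
    unfolding AM by (subst det_four_block_mat_lower_left_zero[of _ k _ "n-k"]) (use Gc in auto)
  have E1: "cnj (det M) * det M = complex_of_real lam ^ k * det G"
    using detAM det_mult[OF adjm_carrier[OF Mc] Mc] det_adjm[OF Mc] by simp
  define Q where "Q = mat (n-k) k (\<lambda>(c,b). (W * A) $$ (k+c,b))"
  have ZM: "W * M = four_block_mat P (0\<^sub>m k (n-k)) Q (1\<^sub>m (n-k))"
  proof (rule eq_matI)
    fix c b assume "c < dim_row (four_block_mat P (0\<^sub>m k (n-k)) Q (1\<^sub>m (n-k)))" "b < dim_col (four_block_mat P (0\<^sub>m k (n-k)) Q (1\<^sub>m (n-k)))"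
    hence cb: "c < n" "b < n" using Pc kn by auto
    have e: "(W * M) $$ (c,b) = (\<Sum>r<n. W $$ (c,r) * M $$ (r,b))"
      using cb Wc Mc by (simp add: scalar_prod_def atLeast0LessThan)
    have WA: "(W * A) $$ (c,b) = (\<Sum>r<n. W $$ (c,r) * A $$ (r,b))" if "b < k"
      using cb that Wc Ac by (simp add: scalar_prod_def atLeast0LessThan)
    have WVi: "(W * V) $$ (c,b) = (\<Sum>r<n. W $$ (c,r) * V $$ (r,b))"
      using cb Wc Vc by (simp add: scalar_prod_def atLeast0LessThan)
    have WV1: "(W * V) $$ (c,b) = (if c = b then 1 else 0)" using WV cb by simp
    show "(W * M) $$ (c,b) = four_block_mat P (0\<^sub>m k (n-k)) Q (1\<^sub>m (n-k)) $$ (c,b)"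
    proof (cases "b < k")
      case True
      have "(W * M) $$ (c,b) = (W * A) $$ (c,b)" unfolding e WA[OF True]
        by (rule sum.cong) (use cb True in \<open>auto simp: M_def\<close>)
      thus ?thesis using True cb Pc kn unfolding P_def Q_def by simp
    next
      case False
      have "(W * M) $$ (c,b) = (if c = b then 1 else 0)" unfolding e WV1[symmetric] WVi
        by (rule sum.cong) (use cb False in \<open>auto simp: M_def\<close>)
      thus ?thesis using False cb Pc kn by auto
    qed
  qed (use Pc Wc Mc kn in auto)
  have detZ: "det (W * M) = det P"
    unfolding ZM by (subst det_four_block_mat_upper_right_zero[of _ k _ "n-k"]) (use Pc in \<open>auto simp: Q_def\<close>)
  have MVZ: "M = V * (W * M)"
    using VW Vc Wc Mc by (simp add: assoc_mult_mat[of V n n W n M n, symmetric])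
  have detM: "det M = det V * det P"
    using MVZ det_mult[OF Vc, of "W * M"] Wc Mc detZ by (metis mult_carrier_mat)
  obtain u where u: "u \<in> R" "det V * u = 1" using V unfolding unimod_def by auto
  have nV: "cmod (det V) = 1" using unit_norm[OF Rmat_det[OF RV] u(1) u(2)] .
  have nM: "cmod (det M) = cmod (det P)" unfolding detM norm_mult nV by simp
  have nHP: "cmod (det H) * cmod (det P) = lam ^ k"
    using arg_cong[OF detHP, of cmod] lam by (simp add: norm_mult norm_power)
  have nH0: "cmod (det H) > 0" using detH0 by simp
  have nP: "cmod (det P) = lam ^ k / cmod (det H)" using nHP nH0 by (simp add: field_simps)
  have E2: "complex_of_real ((cmod (det M))^2) = complex_of_real (lam ^ k) * det G"
    using E1 unfolding complex_norm_square by (simp add: mult.commute)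
  have dG: "det G = complex_of_real (lam ^ k / (cmod (det H))^2)"
  proof -
    have lk: "lam ^ k > 0" using lam by simp
    have lk0: "complex_of_real (lam ^ k) \<noteq> 0" using lam by simp
    have "det G = complex_of_real (lam ^ k) * det G / complex_of_real (lam ^ k)"
      using lk0 by simp
    also have "\<dots> = complex_of_real ((cmod (det M))^2) / complex_of_real (lam ^ k)"
      unfolding E2 ..
    also have "\<dots> = complex_of_real ((cmod (det M))^2 / lam ^ k)" by simp
    also have "(cmod (det M))^2 / lam ^ k = lam ^ k / (cmod (det H))^2"
      unfolding nM nP using lk nH0 by (simp add: field_simps power2_eq_square)
    finally show ?thesis .
  qed
  have RK: "Rmat R K" unfolding K_def using RX RV Xc Vc by (intro Rmat_mult) auto
  have RH: "Rmat R H" using RK Kc kn unfolding Rmat_def H_def by auto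
  have HR: "det H \<in> R" using Rmat_det[OF RH] .
  have XKW: "K * W = X" unfolding K_def using Xc Vc Wc VW
    by (simp add: assoc_mult_mat[of X k n V n W n])
  have Ar: "A $$ (r,b) = (\<Sum>c<k. cnj (H $$ (b,c)) * cnj (W $$ (c,r)))" if "r < n" "b < k" for r b
  proof -
    have "X $$ (b,r) = (K * W) $$ (b,r)" unfolding XKW ..
    also have "\<dots> = (\<Sum>c<n. K $$ (b,c) * W $$ (c,r))" using that Kc Wc by (simp add: scalar_prod_def atLeast0LessThan)
    also have "\<dots> = (\<Sum>c<k. K $$ (b,c) * W $$ (c,r))"
      by (rule sum.mono_neutral_right) (use kn K0 that in auto)
    also have "\<dots> = (\<Sum>c<k. H $$ (b,c) * W $$ (c,r))" by (rule sum.cong) (use that in \<open>auto simp: H_def\<close>)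
    finally have "X $$ (b,r) = \<dots>" .
    hence "cnj (X $$ (b,r)) = cnj (\<Sum>c<k. H $$ (b,c) * W $$ (c,r))" by simp
    thus ?thesis using Xi[OF that(2) that(1)] by simp
  qed
  have dH1: "R_dvd R (cnj (det H)) m" if m: "m \<in> minors k A" for m
  proof -
    obtain I where I: "m = det (submatrix A I {0..<k})" "I \<subseteq> {0..<dim_row A}" "card I = k"
      using m unfolding minors_def by auto
    have In: "I \<subseteq> {0..<n}" using I Ac by auto
    have dA: "dim_row A = n" "dim_col A = k" using Ac by auto
    have c1: "card {i. i < dim_row A \<and> i \<in> I} = k"
    proof -
      have "{i. i < n \<and> i \<in> I} = I" using In by auto
      thus ?thesis using I(3) dA by simp
    qed
    have c2: "card {j. j < dim_col A \<and> j \<in> {0..<k}} = k"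
    proof -
      have "{j. j < k \<and> j \<in> {0..<k}} = {0..<k}" by auto
      thus ?thesis using dA by simp
    qed
    define Sub where "Sub = submatrix A I {0..<k}"
    have Subc: "Sub \<in> carrier_mat k k" by (rule carrier_matI) (simp_all only: Sub_def dim_submatrix c1 c2)
    have pI: "pick I a < n" if "a < k" for a
      using pick_le[of a n I] c1 dA that by (simp add: conj_commute)
    have Subi: "Sub $$ (a,b) = A $$ (pick I a, b)" if "a < k" "b < k" for a b
      unfolding Sub_def using submatrix_index[of a A I b "{0..<k}"] c1 c2 that pick_interval[OF that(2)] by simp
    define S where "S = mat k k (\<lambda>(a,c). cnj (W $$ (c, pick I a)))"
    have Sc: "S \<in> carrier_mat k k" unfolding S_def by simp
    have RS: "Rmat R S" unfolding Rmat_def S_def using pI Went kn by (auto intro!: cnj)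
    have SH: "Sub = S * adjm H"
    proof (rule eq_matI)
      fix a b assume "a < dim_row (S * adjm H)" "b < dim_col (S * adjm H)"
      hence ab: "a < k" "b < k" using Sc Hc by auto
      have "(S * adjm H) $$ (a,b) = (\<Sum>c<k. cnj (W $$ (c, pick I a)) * cnj (H $$ (b,c)))"
        using ab Sc Hc unfolding S_def by (simp add: scalar_prod_def atLeast0LessThan)
      also have "\<dots> = A $$ (pick I a, b)" unfolding Ar[OF pI[OF ab(1)] ab(2)] by (simp add: mult.commute)
      finally show "Sub $$ (a,b) = (S * adjm H) $$ (a,b)" using Subi ab by simp
    qed (use Subc Sc Hc in auto)
    have "m = det S * cnj (det H)" unfolding I(1) Sub_def[symmetric] SH
      using det_mult[OF Sc adjm_carrier[OF Hc]] det_adjm[OF Hc] by simp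
    thus ?thesis unfolding R_dvd_def using Rmat_det[OF RS] by (auto simp: mult.commute)
  qed
  have dH2: "R_dvd R d (cnj (det H))" if d: "is_det_divisor R k A d" for d
  proof -
    define Y where "Y = mat k n (\<lambda>(c,r). cnj (V $$ (r,c)))"
    have Yc: "Y \<in> carrier_mat k n" unfolding Y_def by simp
    have RY: "Rmat R Y" unfolding Rmat_def Y_def using Vent kn by (auto intro!: cnj)
    have YA: "adjm H = Y * A"
    proof (rule eq_matI)
      fix c b assume "c < dim_row (Y * A)" "b < dim_col (Y * A)"
      hence cb: "c < k" "b < k" using Yc Ac by auto
      have "(Y * A) $$ (c,b) = (\<Sum>r<n. cnj (V $$ (r,c)) * A $$ (r,b))"
        using cb Yc Ac unfolding Y_def by (simp add: scalar_prod_def atLeast0LessThan)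
      also have "\<dots> = cnj (K $$ (b,c))" unfolding Kidx[OF cb(2) order.strict_trans[OF cb(1) kn]]
        by (simp add: mult.commute)
      finally show "adjm H $$ (c,b) = (Y * A) $$ (c,b)" using cb Hc unfolding H_def by simp
    qed (use Yc Ac Hc in auto)
    have "\<forall>m\<in>minors k A. R_dvd R d m" using d unfolding is_det_divisor_def by auto
    from CB_dvd[OF Ac RA Yc RY this] show ?thesis unfolding YA[symmetric] det_adjm[OF Hc] .
  qed
  have nd: "cmod d = cmod (det H)" if d: "is_det_divisor R k A d" for d
  proof -
    have dR: "d \<in> R" and dall: "\<forall>e\<in>R. (\<forall>m\<in>minors k A. R_dvd R e m) \<longrightarrow> R_dvd R e d"
      using d unfolding is_det_divisor_def by auto
    have "R_dvd R (cnj (det H)) d" using dall HR dH1 by auto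
    then obtain u where u: "u \<in> R" "d = cnj (det H) * u" unfolding R_dvd_def by auto
    obtain v where v: "v \<in> R" "cnj (det H) = d * v" using dH2[OF d] unfolding R_dvd_def by auto
    have "cnj (det H) * 1 = cnj (det H) * (u * v)"
    proof -
      have "cnj (det H) = d * v" by (rule v(2))
      also have "\<dots> = cnj (det H) * u * v" unfolding u(2) ..
      finally show ?thesis by (simp add: mult.assoc)
    qed
    moreover have cH0: "cnj (det H) \<noteq> 0" using detH0 by simp
    ultimately have "1 = u * v" using mult_left_cancel[OF cH0, of 1 "u * v"] by blast
    hence "u * v = 1" by simp
    hence "cmod u = 1" using unit_norm u(1) v(1) by blast
    thus ?thesis using u(2) by (simp add: norm_mult)
  qed
  have dex: "\<exists>d. is_det_divisor R k A d"
  proof -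
    have fin: "finite (minors k A)"
    proof -
      have "minors k A \<subseteq> (\<lambda>I. det (submatrix A I {0..<k})) ` Pow {0..<dim_row A}"
        unfolding minors_def by auto
      thus ?thesis by (rule finite_subset) auto
    qed
    have sub: "minors k A \<subseteq> R"
    proof
      fix m assume "m \<in> minors k A"
      then obtain I where I: "m = det (submatrix A I {0..<k})" unfolding minors_def by auto
      have "submatrix A I {0..<k} $$ (i,j) \<in> R" if "i < dim_row (submatrix A I {0..<k})" "j < dim_col (submatrix A I {0..<k})" for i j
      proof -
        have ij: "i < card {i. i < dim_row A \<and> i \<in> I}" "j < card {j. j < dim_col A \<and> j \<in> {0..<k}}"
          using that by (simp_all add: dim_submatrix)
        have "pick I i < dim_row A" using pick_le[of i "dim_row A" I] ij(1) by (simp add: conj_commute)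
        moreover have "pick {0..<k} j < dim_col A" using pick_le[of j "dim_col A" "{0..<k}"] ij(2) by (simp add: conj_commute)
        ultimately show ?thesis unfolding submatrix_index[OF ij] using RA unfolding Rmat_def by auto
      qed
      thus "m \<in> R" unfolding I by (rule det_in)
    qed
    from gcd_exists[OF fin sub] obtain g where "g \<in> R" "\<forall>m\<in>minors k A. R_dvd R g m"
      "\<forall>e\<in>R. (\<forall>m\<in>minors k A. R_dvd R e m) \<longrightarrow> R_dvd R e g" by blast
    thus ?thesis unfolding is_det_divisor_def by blast
  qed
  show ?thesis
  proof (intro conjI allI impI)
    show "\<exists>bs. length bs = n - k \<and> is_R_basis R n (orth_lattice R n k A) bs"
      using lb basis unfolding L_def by blast
    show "\<exists>d. is_det_divisor R k A d" by (rule dex)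
    fix bs' d assume B': "is_R_basis R n (orth_lattice R n k A) bs'" and d: "is_det_divisor R k A d"
    have "det (gram bs') = det G" using basis_change[OF Lc basis B'[folded L_def]] unfolding G_def by simp
    thus "det (gram bs') = complex_of_real (lam ^ k / (cmod d)\<^sup>2)" unfolding dG nd[OF d] .
  qed
qed

end

theorem mainTheorem15:
  fixes R :: "complex set" and n k :: nat and lam :: real and A0 :: "complex mat"
  assumes "R = rat_ints \<or> R = gauss_ints"
    and "1 \<le> k" and "k < n"
    and "icube R n k lam A0"
  shows "(\<exists>bs. length bs = n - k \<and> is_R_basis R n (orth_lattice R n k A0) bs)
       \<and> (\<exists>d. is_det_divisor R k A0 d)
       \<and> (\<forall>bs d. is_R_basis R n (orth_lattice R n k A0) bs \<longrightarrow> is_det_divisor R k A0 d \<longrightarrow>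
            det (gram bs) = complex_of_real (lam ^ k / (cmod d)\<^sup>2))"
proof -
  have "goodR R" using assms(1) goodR_rat goodR_gauss by auto
  then interpret gr R by unfold_locales
  show ?thesis by (rule main_gr[OF assms(2) assms(3) assms(4)])
qed

end
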